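(* Assume (H1), (H2) and let $\mu$ be a probability measure on $[0,1]$ with a strictly positive Lebesgue density. Then almost surely, for every $\epsilon>0$, the function $U^\epsilon$ on $\Theta$ defined by \[ U^\epsilon(\xi)=\int_0^1\Big[\log\Big(\int_0^1\sigma_t^x(\xi)^2\mu(dx)+\epsilon\Big)+\frac{\int_0^1\sigma_t^x(\theta)^2\mu(dx)+\epsilon}{\int_0^1\sigma_t^x(\xi)^2\mu(dx)+\epsilon}\Big]dt \] has $\xi=\theta$ as its unique minimizer.
   Context: Let $\Theta\subset\mathbb{R}^q$ be compact and convex. Let $(\Omega,\mathscr F,(\mathscr F_t)_{t\in[0,1]},P)$ be a filtered probability space carrying a one-dimensional $(\mathscr F_t)$-standard Brownian motion $W$. Let $k:\Theta\times[0,1]\to\mathbb{R}$ be a kernel, extended by $k(\xi,t)=0$ for $t<0$. Fix a true parameter $\theta\in\Theta$ and a deterministic, continuous, strictly positive function $u\mapsto V_0^u$ on $[0,1]$. For $0\le t\le u\le1$ set $V_t^u=V_0^u\exp\big(\int_0^t k(\theta,u-s)\,dW_s-\tfrac12\int_0^t k(\theta,u-s)^2ds\big)$, $V_t^u=0$ for $t>u$. For $\xi\in\Theta$, $0\le t<x\le1$ let $\sigma_t^x(\xi)=\int_t^x k(\xi,u-t)V_t^u\,du$, and $\sigma_t^x(\xi)=0$ for $t\ge x$. (H1): $k\in C^{2,2}(\Theta\times[0,1])$ and $k>0$. (H2): for all $\xi\ne\xi'$ in $\Theta$ there is $\delta>0$ such that $k(\xi,\cdot)-k(\xi',\cdot)$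 has a constant nonzero sign on $(0,\delta)$. *)

theory Defs
  imports "HOL-Probability.Probability"
begin

definition filtered_prob_space :: "'a measure \<Rightarrow> (real \<Rightarrow> 'a measure) \<Rightarrow> bool" where
  "filtered_prob_space M F \<longleftrightarrow> prob_space M \<and>
     (\<forall>t\<in>{0..1}. subalgebra M (F t)) \<and>
     (\<forall>s\<in>{0..1}. \<forall>t\<in>{0..1}. s \<le> t \<longrightarrow> sets (F s) \<subseteq> sets (F t))"

definition std_BM :: "'a measure \<Rightarrow> (real \<Rightarrow> 'a measure) \<Rightarrow> (real \<Rightarrow> 'a \<Rightarrow> real) \<Rightarrow> bool" where
  "std_BM M F W \<longleftrightarrow> filtered_prob_space M F \<and>
     (\<forall>t\<in>{0..1}. W t \<in> borel_measurable (F t)) \<and>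
     (AE \<omega> in M. W 0 \<omega> = 0) \<and>
     (AE \<omega> in M. continuous_on {0..1} (\<lambda>t. W t \<omega>)) \<and>
     (\<forall>s\<in>{0..1}. \<forall>t\<in>{0..1}. s < t \<longrightarrow>
        distributed M lborel (\<lambda>\<omega>. W t \<omega> - W s \<omega>) (normal_density 0 (sqrt (t - s))) \<and>
        prob_space.indep_set M (sets (F s))
          (sets (vimage_algebra (space M) (\<lambda>\<omega>. W t \<omega> - W s \<omega>) borel)))"

text \<open>Partial derivative operators on functions of (xi, t): Some v = derivative in xi
  in direction v, None = derivative in t.\<close>
definition pdir :: "('p::real_normed_vector \<Rightarrow> real \<Rightarrow> real) \<Rightarrow> 'p option \<Rightarrow> 'p \<Rightarrow> real \<Rightarrow> real" where
  "pdir f d = (case d of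
      Some v \<Rightarrow> (\<lambda>x t. deriv (\<lambda>h. f (x + h *\<^sub>R v) t) 0)
    | None \<Rightarrow> (\<lambda>x t. deriv (\<lambda>s. f x s) t))"

definition pdir_differentiable :: "('p::real_normed_vector \<Rightarrow> real \<Rightarrow> real) \<Rightarrow> 'p option \<Rightarrow> 'p \<Rightarrow> real \<Rightarrow> bool" where
  "pdir_differentiable f d x t = (case d of
      Some v \<Rightarrow> (\<lambda>h. f (x + h *\<^sub>R v) t) field_differentiable (at 0)
    | None \<Rightarrow> (\<lambda>s. f x s) field_differentiable (at t))"

fun papply :: "('p::real_normed_vector \<Rightarrow> real \<Rightarrow> real) \<Rightarrow> 'p option list \<Rightarrow> 'p \<Rightarrow> real \<Rightarrow> real" where
  "papply f [] = f"
| "papply f (d # ds) = pdir (papply f ds) d"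

definition admissible22 :: "'p::euclidean_space option list \<Rightarrow> bool" where
  "admissible22 ds \<longleftrightarrow> (\<forall>d\<in>set ds. d = None \<or> (\<exists>v\<in>Basis. d = Some v)) \<and>
     length (filter (\<lambda>d. d = None) ds) \<le> 2 \<and> length (filter (\<lambda>d. d \<noteq> None) ds) \<le> 2"

definition C22_on :: "('p::euclidean_space \<Rightarrow> real \<Rightarrow> real) \<Rightarrow> 'p set \<Rightarrow> real set \<Rightarrow> bool" where
  "C22_on k A T \<longleftrightarrow> (\<exists>S K. open S \<and> A \<times> T \<subseteq> S \<and>
     (\<forall>x\<in>A. \<forall>t\<in>T. K x t = k x t) \<and>
     (\<forall>ds. admissible22 ds \<longrightarrow> continuous_on S (\<lambda>z. papply K ds (fst z) (snd z))) \<and>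
     (\<forall>d ds. admissible22 (d # ds) \<longrightarrow> (\<forall>z\<in>S. pdir_differentiable (papply K ds) d (fst z) (snd z))))"

definition kdot :: "('p \<Rightarrow> real \<Rightarrow> real) \<Rightarrow> 'p \<Rightarrow> real \<Rightarrow> real" where
  "kdot k \<xi> r = vector_derivative (\<lambda>s. k \<xi> s) (at r within {0..1})"

text \<open>Wiener integral int_0^t k(theta,u-s) dW_s of the deterministic C^1 integrand,
  realised pathwise via integration by parts (valid for 0 <= t <= u <= 1).\<close>
definition wiener_int :: "('p \<Rightarrow> real \<Rightarrow> real) \<Rightarrow> 'p \<Rightarrow> (real \<Rightarrow> 'a \<Rightarrow> real) \<Rightarrow> real \<Rightarrow> real \<Rightarrow> 'a \<Rightarrow> real" where
  "wiener_int k \<theta> W t u \<omega> =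
     k \<theta> (u - t) * W t \<omega> - k \<theta> u * W 0 \<omega> + (LBINT s=0..t. W s \<omega> * kdot k \<theta> (u - s))"

definition Vproc :: "('p \<Rightarrow> real \<Rightarrow> real) \<Rightarrow> 'p \<Rightarrow> (real \<Rightarrow> real) \<Rightarrow> (real \<Rightarrow> 'a \<Rightarrow> real) \<Rightarrow> real \<Rightarrow> real \<Rightarrow> 'a \<Rightarrow> real" where
  "Vproc k \<theta> V0 W t u \<omega> = (if t \<le> u then
      V0 u * exp (wiener_int k \<theta> W t u \<omega> - 1/2 * (LBINT s=0..t. (k \<theta> (u - s))\<^sup>2))
    else 0)"

definition sigma_fwd :: "('p \<Rightarrow> real \<Rightarrow> real) \<Rightarrow> 'p \<Rightarrow> (real \<Rightarrow> real) \<Rightarrow> (real \<Rightarrow> 'a \<Rightarrow> real) \<Rightarrow> real \<Rightarrow> real \<Rightarrow> 'p \<Rightarrow> 'a \<Rightarrow> real" where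
  "sigma_fwd k \<theta> V0 W t x \<xi> \<omega> = (if t < x then
      (LBINT u=t..x. k \<xi> (u - t) * Vproc k \<theta> V0 W t u \<omega>)
    else 0)"

definition Ueps :: "('p \<Rightarrow> real \<Rightarrow> real) \<Rightarrow> 'p \<Rightarrow> (real \<Rightarrow> real) \<Rightarrow> (real \<Rightarrow> 'a \<Rightarrow> real) \<Rightarrow> real measure \<Rightarrow> real \<Rightarrow> 'p \<Rightarrow> 'a \<Rightarrow> real" where
  "Ueps k \<theta> V0 W \<mu> \<epsilon> \<xi> \<omega> =
     (LBINT t=0..1.
        ln ((\<integral>x. (sigma_fwd k \<theta> V0 W t x \<xi> \<omega>)\<^sup>2 \<partial>\<mu>) + \<epsilon>)
        + ((\<integral>x. (sigma_fwd k \<theta> V0 W t x \<theta> \<omega>)\<^sup>2 \<partial>\<mu>) + \<epsilon>)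
          / ((\<integral>x. (sigma_fwd k \<theta> V0 W t x \<xi> \<omega>)\<^sup>2 \<partial>\<mu>) + \<epsilon>))"

end

theory Submission
  imports Defs
begin

lemma pred_ioo[measurable (raw)]:
  fixes f g h :: "'a \<Rightarrow> real"
  assumes [measurable]: "f \<in> borel_measurable M" "g \<in> borel_measurable M" "h \<in> borel_measurable M"
  shows "Measurable.pred M (\<lambda>x. f x \<in> {g x<..<h x})"
  by (simp add: greaterThanLessThan_iff) measurable

lemma pred_icc[measurable (raw)]:
  fixes f g h :: "'a \<Rightarrow> real"
  assumes [measurable]: "f \<in> borel_measurable M" "g \<in> borel_measurable M" "h \<in> borel_measurable M"
  shows "Measurable.pred M (\<lambda>x. f x \<in> {g x..h x})"
  by (simp add: atLeastAtMost_iff) measurable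

declare sets_lborel[measurable_cong]

lemma bdd_int:
  fixes g :: "real \<Rightarrow> real"
  assumes g: "g \<in> borel_measurable borel" and bd: "\<And>s. s \<in> {a<..<b} \<Longrightarrow> \<bar>g s\<bar> \<le> C"
    and ab: "a \<le> b" and C: "0 \<le> C"
  shows "integrable lborel (\<lambda>s. indicator {a<..<b} s * g s)"
    "\<bar>LINT s|lborel. indicator {a<..<b} s * g s\<bar> \<le> C * (b - a)"
proof -
  have i1: "integrable lborel (\<lambda>s. C * indicator {a<..<b} s)"
    by (intro integrable_mult_right integrable_real_indicator) (use ab in auto)
  have m: "(\<lambda>s. indicator {a<..<b} s * g s) \<in> borel_measurable lborel"
    using g by measurable
  have b: "\<bar>indicator {a<..<b} s * g s\<bar> \<le> C * indicator {a<..<b} s" for s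
    using bd[of s] C by (auto simp: indicator_def)
  show i2: "integrable lborel (\<lambda>s. indicator {a<..<b} s * g s)"
    by (rule Bochner_Integration.integrable_bound[OF i1 m]) (use b C in \<open>auto simp: indicator_def\<close>)
  have "\<bar>LINT s|lborel. indicator {a<..<b} s * g s\<bar> \<le> (LINT s|lborel. C * indicator {a<..<b} s)"
    by (rule integral_abs_bound_integral[OF i2 i1 b])
  also have "\<dots> = C * (b - a)" using ab by simp
  finally show "\<bar>LINT s|lborel. indicator {a<..<b} s * g s\<bar> \<le> C * (b - a)" .
qed

lemma pos_int:
  fixes g :: "real \<Rightarrow> real"
  assumes i: "integrable lborel g" and nn: "\<And>x. 0 \<le> g x" and ab: "a < b"
    and pos: "\<And>x. x \<in> {a<..<b} \<Longrightarrow> 0 < g x"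
  shows "0 < integral\<^sup>L lborel g"
proof -
  have "integral\<^sup>L lborel g \<noteq> 0"
  proof
    assume "integral\<^sup>L lborel g = 0"
    then have "AE x in lborel. g x = 0" using integral_nonneg_eq_0_iff_AE[OF i] nn by auto
    then have "AE x in lborel. x \<notin> {a<..<b}" by eventually_elim (use pos in force)
    then have "emeasure lborel {a<..<b} = 0"
      by (subst (asm) AE_iff_measurable[of "{a<..<b}"]) auto
    then show False using ab by simp
  qed
  moreover have "0 \<le> integral\<^sup>L lborel g" using nn by simp
  ultimately show ?thesis by linarith
qed

lemma h_ge:
  fixes a c e :: real
  assumes "0 \<le> a" "0 \<le> c" "0 < e"
  shows "ln (c + e) + (c + e) / (c + e) \<le> ln (a + e) + (c + e) / (a + e)"
proof -
  have "ln (c + e) - ln (a + e) \<le> ((c + e) - (a + e)) / (a + e)"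
    using assms by (intro ln_diff_le) auto
  also have "\<dots> = (c + e) / (a + e) - 1" using assms by (simp add: field_simps)
  finally show ?thesis using assms by simp
qed

lemma h_gt:
  fixes a c e :: real
  assumes "0 \<le> a" "0 \<le> c" "0 < e" "a \<noteq> c"
  shows "ln (c + e) + (c + e) / (c + e) < ln (a + e) + (c + e) / (a + e)"
proof -
  have "ln (c + e) - ln (a + e) < ((c + e) - (a + e)) / (a + e)"
    using assms by (intro ln_diff_less) auto
  also have "\<dots> = (c + e) / (a + e) - 1" using assms by (simp add: field_simps)
  finally show ?thesis using assms by simp
qed

lemma h_bound:
  fixes a c e :: real
  assumes "0 \<le> a" "a \<le> A" "0 \<le> c" "c \<le> B" "0 < e"
  shows "\<bar>ln (a + e) + (c + e) / (a + e)\<bar> \<le> \<bar>ln e\<bar> + A + e + (B + e) / e"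
proof -
  have l1: "ln e \<le> ln (a + e)" using assms by simp
  have l2: "ln (a + e) \<le> a + e" using assms ln_le_minus_one[of "a+e"] by simp
  have r0: "0 \<le> (c + e) / (a + e)" using assms by simp
  have "(c + e) / (a + e) \<le> (c + e) / e" using assms by (intro divide_left_mono) auto
  also have "\<dots> \<le> (B + e) / e" using assms by (intro divide_right_mono) auto
  finally have r1: "(c + e) / (a + e) \<le> (B + e) / e" .
  show ?thesis unfolding abs_le_iff
    using l1 l2 r0 r1 assms abs_ge_self[of "ln e"] abs_ge_minus_self[of "ln e"] by linarith
qed

definition Gn :: "(real\<Rightarrow>real) \<Rightarrow> (real\<Rightarrow>real) \<Rightarrow> (real\<Rightarrow>real) \<Rightarrow> real \<Rightarrow> real \<Rightarrow> real" where
 "Gn w kt dk t u = kt (u - t) * w t - kt u * w 0 + (LINT s|lborel. indicator {0<..<t} s * (w s * dk (u - s)))"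

definition Qn :: "(real\<Rightarrow>real) \<Rightarrow> real \<Rightarrow> real \<Rightarrow> real" where
 "Qn kt t u = (LINT s|lborel. indicator {0<..<t} s * (kt (u - s))\<^sup>2)"

definition Vn where
 "Vn w kt dk v0 t u = (if t \<le> u then v0 u * exp (Gn w kt dk t u - 1/2 * Qn kt t u) else 0)"

definition Sn where
 "Sn w kt dk v0 kx t x = (if t < x then (LINT u|lborel. indicator {t<..<x} u * (kx (u - t) * Vn w kt dk v0 t u)) else 0)"

definition An where
 "An w kt dk v0 f kx t = (LINT x|lborel. f x * indicator {0..1} x * (Sn w kt dk v0 kx t x)\<^sup>2)"

definition Uf where
 "Uf w kt dk v0 f kx \<epsilon> = (LINT t|lborel. indicator {0<..<1} t *
    (ln (An w kt dk v0 f kx t + \<epsilon>) + (An w kt dk v0 f kt t + \<epsilon>) / (An w kt dk v0 f kx t + \<epsilon>)))"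

locale nice =
  fixes w kt dk v0 f :: "real \<Rightarrow> real" and Cw Ck Cd Cv :: real
  assumes mw[measurable]: "w \<in> borel_measurable borel"
    and mkt[measurable]: "kt \<in> borel_measurable borel"
    and mdk[measurable]: "dk \<in> borel_measurable borel"
    and mv0[measurable]: "v0 \<in> borel_measurable borel"
    and mf[measurable]: "f \<in> borel_measurable borel"
    and bw: "\<And>s. \<bar>w s\<bar> \<le> Cw" and bkt: "\<And>s. \<bar>kt s\<bar> \<le> Ck" and bdk: "\<And>s. \<bar>dk s\<bar> \<le> Cd"
    and bv0: "\<And>s. v0 s \<le> Cv" and pv0: "\<And>s. 0 < v0 s" and pkt: "\<And>s. 0 < kt s"
    and fnn: "\<And>x. 0 \<le> f x" and fpos: "\<And>x. x \<in> {0..1} \<Longrightarrow> 0 < f x"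
    and intf: "integrable lborel f"
begin

lemma Cs: "0 \<le> Cw" "0 \<le> Ck" "0 \<le> Cd" "0 \<le> Cv"
  using bw[of 0] bkt[of 0] bdk[of 0] bv0[of 0] pv0[of 0] by auto

lemma Gn_meas: "(\<lambda>p. Gn w kt dk (fst p) (snd p)) \<in> borel_measurable (borel \<Otimes>\<^sub>M borel)"
  unfolding Gn_def by measurable

lemma Gn_meas_raw[measurable (raw)]:
  assumes "a \<in> borel_measurable M" "b \<in> borel_measurable M"
  shows "(\<lambda>x. Gn w kt dk (a x) (b x)) \<in> borel_measurable M"
  using measurable_compose[OF measurable_Pair[OF assms] Gn_meas] by simp

lemma Qn_meas: "(\<lambda>p. Qn kt (fst p) (snd p)) \<in> borel_measurable (borel \<Otimes>\<^sub>M borel)"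
  unfolding Qn_def by measurable

lemma Qn_meas_raw[measurable (raw)]:
  assumes "a \<in> borel_measurable M" "b \<in> borel_measurable M"
  shows "(\<lambda>x. Qn kt (a x) (b x)) \<in> borel_measurable M"
  using measurable_compose[OF measurable_Pair[OF assms] Qn_meas] by simp

lemma Vn_meas: "(\<lambda>p. Vn w kt dk v0 (fst p) (snd p)) \<in> borel_measurable (borel \<Otimes>\<^sub>M borel)"
  unfolding Vn_def by measurable

lemma Vn_meas_raw[measurable (raw)]:
  assumes "a \<in> borel_measurable M" "b \<in> borel_measurable M"
  shows "(\<lambda>x. Vn w kt dk v0 (a x) (b x)) \<in> borel_measurable M"
  using measurable_compose[OF measurable_Pair[OF assms] Vn_meas] by simp

lemma Vn_meas1[measurable]: "(\<lambda>u. Vn w kt dk v0 t u) \<in> borel_measurable borel"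
  using measurable_compose[OF measurable_Pair1'[of t borel borel] Vn_meas] by (simp add: comp_def)

lemma Gn_bound: assumes "0 \<le> t" "t \<le> 1" shows "\<bar>Gn w kt dk t u\<bar> \<le> 2*Ck*Cw + Cw*Cd"
proof -
  have "\<bar>LINT s|lborel. indicator {0<..<t} s * (w s * dk (u - s))\<bar> \<le> (Cw*Cd) * (t - 0)"
    by (rule bdd_int(2)) (use assms Cs in \<open>auto simp: abs_mult intro!: mult_mono bw bdk\<close>)
  also have "\<dots> \<le> Cw*Cd" using assms Cs by (simp add: mult_left_le)
  finally have i: "\<bar>LINT s|lborel. indicator {0<..<t} s * (w s * dk (u - s))\<bar> \<le> Cw*Cd" .
  have a: "\<bar>kt (u - t) * w t\<bar> \<le> Ck * Cw" "\<bar>kt u * w 0\<bar> \<le> Ck * Cw"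
    by (auto simp: abs_mult intro!: mult_mono bw bkt Cs)
  show ?thesis unfolding Gn_def using i a by linarith
qed

lemma Qn_nonneg: "0 \<le> Qn kt t u"
  unfolding Qn_def by (rule Bochner_Integration.integral_nonneg) (auto simp: indicator_def)

definition "CV = Cv * exp (2*Ck*Cw + Cw*Cd)"

lemma Vn_bound: assumes "0 \<le> t" "t \<le> 1" shows "Vn w kt dk v0 t u \<le> CV"
proof (cases "t \<le> u")
  case True
  have "exp (Gn w kt dk t u - 1/2 * Qn kt t u) \<le> exp (2*Ck*Cw + Cw*Cd)"
    using Gn_bound[OF assms, of u] Qn_nonneg[of t u] by simp
  then show ?thesis using True unfolding Vn_def CV_def
    using Cs by (auto intro!: mult_mono bv0 less_imp_le[OF pv0])
next
  case False then show ?thesis unfolding Vn_def CV_def using Cs by simp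
qed

lemma Vn_nonneg: "0 \<le> Vn w kt dk v0 t u"
  unfolding Vn_def using pv0[of u] by simp

lemma Vn_pos: "t \<le> u \<Longrightarrow> 0 < Vn w kt dk v0 t u"
  unfolding Vn_def using pv0[of u] by simp

lemma CV_nonneg: "0 \<le> CV" unfolding CV_def using Cs by simp

lemma Sn_meas:
  assumes [measurable]: "kx \<in> borel_measurable borel"
  shows "(\<lambda>p. Sn w kt dk v0 kx (fst p) (snd p)) \<in> borel_measurable (borel \<Otimes>\<^sub>M borel)"
  unfolding Sn_def by measurable

lemma Sn_meas_raw[measurable (raw)]:
  assumes "kx \<in> borel_measurable borel" "a \<in> borel_measurable M" "b \<in> borel_measurable M"
  shows "(\<lambda>x. Sn w kt dk v0 kx (a x) (b x)) \<in> borel_measurable M"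
  using measurable_compose[OF measurable_Pair[OF assms(2,3)] Sn_meas[OF assms(1)]] by simp

lemma Sn_int:
  assumes [measurable]: "kx \<in> borel_measurable borel" and bx: "\<And>r. \<bar>kx r\<bar> \<le> Cx"
    and t: "0 \<le> t" "t \<le> 1" "t < x"
  shows "integrable lborel (\<lambda>u. indicator {t<..<x} u * (kx (u - t) * Vn w kt dk v0 t u))"
  by (rule bdd_int(1)[where C="Cx*CV"]) (use t bx[of 0] CV_nonneg Vn_nonneg Vn_bound in
      \<open>auto simp: abs_mult intro!: mult_mono bx\<close>)

lemma Sn_bound:
  assumes [measurable]: "kx \<in> borel_measurable borel" and bx: "\<And>r. \<bar>kx r\<bar> \<le> Cx"
    and t: "0 \<le> t" "t \<le> 1" "x \<le> 1"
  shows "\<bar>Sn w kt dk v0 kx t x\<bar> \<le> Cx * CV"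
proof (cases "t < x")
  case True
  have "\<bar>LINT u|lborel. indicator {t<..<x} u * (kx (u - t) * Vn w kt dk v0 t u)\<bar> \<le> (Cx*CV) * (x - t)"
    by (rule bdd_int(2)) (use t True bx[of 0] CV_nonneg Vn_nonneg Vn_bound in
      \<open>auto simp: abs_mult intro!: mult_mono bx\<close>)
  also have "\<dots> \<le> Cx * CV" using t True bx[of 0] CV_nonneg
    by (intro mult_left_le) auto
  finally show ?thesis using True unfolding Sn_def by simp
next
  case False then show ?thesis unfolding Sn_def using bx[of 0] CV_nonneg by simp
qed

lemma Sn_nonneg:
  assumes "\<And>r. 0 \<le> kx r"
  shows "0 \<le> Sn w kt dk v0 kx t x"
  unfolding Sn_def using assms Vn_nonneg
  by (auto intro!: Bochner_Integration.integral_nonneg simp: indicator_def)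

lemma An_meas[measurable]:
  assumes [measurable]: "kx \<in> borel_measurable borel"
  shows "(\<lambda>t. An w kt dk v0 f kx t) \<in> borel_measurable borel"
  unfolding An_def by measurable

lemma An_nonneg: "0 \<le> An w kt dk v0 f kx t"
  unfolding An_def using fnn by (auto intro!: Bochner_Integration.integral_nonneg simp: indicator_def)

lemma An_int:
  assumes [measurable]: "kx \<in> borel_measurable borel" and bx: "\<And>r. \<bar>kx r\<bar> \<le> Cx"
    and t: "0 \<le> t" "t \<le> 1"
  shows "integrable lborel (\<lambda>x. f x * indicator {0..1} x * (Sn w kt dk v0 kx t x)\<^sup>2)"
proof (rule Bochner_Integration.integrable_bound[where f="\<lambda>x. (Cx*CV)\<^sup>2 * f x"])
  show "integrable lborel (\<lambda>x. (Cx * CV)\<^sup>2 * f x)" using intf by simp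
  show "(\<lambda>x. f x * indicator {0..1} x * (Sn w kt dk v0 kx t x)\<^sup>2) \<in> borel_measurable lborel"
    by measurable
  show "AE x in lborel. norm (f x * indicator {0..1} x * (Sn w kt dk v0 kx t x)\<^sup>2) \<le> norm ((Cx * CV)\<^sup>2 * f x)"
  proof (intro AE_I2)
    fix x
    show "norm (f x * indicator {0..1} x * (Sn w kt dk v0 kx t x)\<^sup>2) \<le> norm ((Cx * CV)\<^sup>2 * f x)"
    proof (cases "x \<in> {0..1}")
      case True
      have "\<bar>Sn w kt dk v0 kx t x\<bar> \<le> Cx * CV" using Sn_bound[OF assms(1) bx t] True by auto
      then have "(Sn w kt dk v0 kx t x)\<^sup>2 \<le> (Cx * CV)\<^sup>2"
        by (metis abs_le_square_iff abs_ge_zero order_trans abs_of_nonneg)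
      then show ?thesis using True fnn[of x] by (simp add: abs_mult mult_left_mono mult.commute)
    qed (simp)
  qed
qed

lemma An_bound:
  assumes [measurable]: "kx \<in> borel_measurable borel" and bx: "\<And>r. \<bar>kx r\<bar> \<le> Cx"
    and t: "0 \<le> t" "t \<le> 1"
  shows "An w kt dk v0 f kx t \<le> (Cx*CV)\<^sup>2 * integral\<^sup>L lborel f"
proof -
  have "An w kt dk v0 f kx t \<le> (LINT x|lborel. (Cx*CV)\<^sup>2 * f x)"
    unfolding An_def
  proof (rule integral_mono[OF An_int[OF assms]])
    show "integrable lborel (\<lambda>x. (Cx * CV)\<^sup>2 * f x)" using intf by simp
    fix x
    show "f x * indicator {0..1} x * (Sn w kt dk v0 kx t x)\<^sup>2 \<le> (Cx * CV)\<^sup>2 * f x"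
    proof (cases "x \<in> {0..1}")
      case True
      have "\<bar>Sn w kt dk v0 kx t x\<bar> \<le> Cx * CV" using Sn_bound[OF assms(1) bx t] True by auto
      then have "(Sn w kt dk v0 kx t x)\<^sup>2 \<le> (Cx * CV)\<^sup>2"
        by (metis abs_le_square_iff abs_ge_zero order_trans abs_of_nonneg)
      then show ?thesis using True fnn[of x] by (simp add: mult_left_mono mult.commute)
    qed (use fnn in simp)
  qed
  then show ?thesis by simp
qed


lemma Sn_strict:
  assumes [measurable]: "k1 \<in> borel_measurable borel" "k2 \<in> borel_measurable borel"
    and b1: "\<And>r. \<bar>k1 r\<bar> \<le> C1" and b2: "\<And>r. \<bar>k2 r\<bar> \<le> C2"
    and lt: "\<And>r. r \<in> {0<..<\<delta>} \<Longrightarrow> k2 r < k1 r"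
    and t: "0 \<le> t" "1 - \<delta> < t" "t < x" "x \<le> 1"
  shows "Sn w kt dk v0 k2 t x < Sn w kt dk v0 k1 t x"
proof -
  have i1: "integrable lborel (\<lambda>u. indicator {t<..<x} u * (k1 (u - t) * Vn w kt dk v0 t u))"
    by (rule Sn_int[OF _ b1]) (use t in auto)
  have i2: "integrable lborel (\<lambda>u. indicator {t<..<x} u * (k2 (u - t) * Vn w kt dk v0 t u))"
    by (rule Sn_int[OF _ b2]) (use t in auto)
  have "Sn w kt dk v0 k1 t x - Sn w kt dk v0 k2 t x =
     (LINT u|lborel. indicator {t<..<x} u * (k1 (u - t) * Vn w kt dk v0 t u) - indicator {t<..<x} u * (k2 (u - t) * Vn w kt dk v0 t u))"
    unfolding Sn_def using t by (simp add: Bochner_Integration.integral_diff[OF i1 i2])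
  also have "\<dots> > 0"
  proof (rule pos_int[where a=t and b=x])
    show "integrable lborel (\<lambda>u. indicator {t<..<x} u * (k1 (u - t) * Vn w kt dk v0 t u) - indicator {t<..<x} u * (k2 (u - t) * Vn w kt dk v0 t u))"
      using i1 i2 by simp
    have p: "0 < k1 (u - t) * Vn w kt dk v0 t u - k2 (u - t) * Vn w kt dk v0 t u" if "u \<in> {t<..<x}" for u
    proof -
      have "k2 (u - t) < k1 (u - t)" using that t by (intro lt) auto
      moreover have "0 < Vn w kt dk v0 t u" using that by (intro Vn_pos) auto
      ultimately show ?thesis by (simp add: left_diff_distrib[symmetric])
    qed
    show "0 \<le> indicator {t<..<x} u * (k1 (u - t) * Vn w kt dk v0 t u) - indicator {t<..<x} u * (k2 (u - t) * Vn w kt dk v0 t u)" for u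
      using p[of u] by (cases "u \<in> {t<..<x}") auto
    show "0 < indicator {t<..<x} u * (k1 (u - t) * Vn w kt dk v0 t u) - indicator {t<..<x} u * (k2 (u - t) * Vn w kt dk v0 t u)" if "u \<in> {t<..<x}" for u
      using p[OF that] that by simp
  qed (use t in auto)
  finally show ?thesis by simp
qed

lemma An_strict:
  assumes [measurable]: "k1 \<in> borel_measurable borel" "k2 \<in> borel_measurable borel"
    and b1: "\<And>r. \<bar>k1 r\<bar> \<le> C1" and b2: "\<And>r. \<bar>k2 r\<bar> \<le> C2" and nn2: "\<And>r. 0 \<le> k2 r"
    and lt: "\<And>r. r \<in> {0<..<\<delta>} \<Longrightarrow> k2 r < k1 r"
    and t: "0 \<le> t" "1 - \<delta> < t" "t < 1"
  shows "An w kt dk v0 f k2 t < An w kt dk v0 f k1 t"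
proof -
  have i1: "integrable lborel (\<lambda>x. f x * indicator {0..1} x * (Sn w kt dk v0 k1 t x)\<^sup>2)"
    by (rule An_int[OF _ b1]) (use t in auto)
  have i2: "integrable lborel (\<lambda>x. f x * indicator {0..1} x * (Sn w kt dk v0 k2 t x)\<^sup>2)"
    by (rule An_int[OF _ b2]) (use t in auto)
  have "An w kt dk v0 f k1 t - An w kt dk v0 f k2 t =
     (LINT x|lborel. f x * indicator {0..1} x * (Sn w kt dk v0 k1 t x)\<^sup>2 - f x * indicator {0..1} x * (Sn w kt dk v0 k2 t x)\<^sup>2)"
    unfolding An_def by (simp add: Bochner_Integration.integral_diff[OF i1 i2])
  also have "\<dots> > 0"
  proof (rule pos_int[where a=t and b=1])
    show "integrable lborel (\<lambda>x. f x * indicator {0..1} x * (Sn w kt dk v0 k1 t x)\<^sup>2 - f x * indicator {0..1} x * (Sn w kt dk v0 k2 t x)\<^sup>2)"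
      using i1 i2 by simp
    have sq: "(Sn w kt dk v0 k2 t x)\<^sup>2 < (Sn w kt dk v0 k1 t x)\<^sup>2" if "t < x" "x \<le> 1" for x
    proof -
      have "Sn w kt dk v0 k2 t x < Sn w kt dk v0 k1 t x"
        by (rule Sn_strict[OF _ _ b1 b2 lt]) (use that t in auto)
      moreover have "0 \<le> Sn w kt dk v0 k2 t x" by (rule Sn_nonneg[OF nn2])
      ultimately show ?thesis by (simp add: power_strict_mono)
    qed
    have le: "(Sn w kt dk v0 k2 t x)\<^sup>2 \<le> (Sn w kt dk v0 k1 t x)\<^sup>2" if "x \<le> 1" for x
    proof (cases "t < x")
      case True then show ?thesis using sq[OF True that] by simp
    next
      case False then show ?thesis by (simp add: Sn_def)
    qed
    show "0 \<le> f x * indicator {0..1} x * (Sn w kt dk v0 k1 t x)\<^sup>2 - f x * indicator {0..1} x * (Sn w kt dk v0 k2 t x)\<^sup>2" for x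
    proof (cases "x \<in> {0..1}")
      case True
      then show ?thesis using le[of x] fnn[of x] by (simp add: right_diff_distrib[symmetric] mult_nonneg_nonneg)
    qed simp
    show "0 < f x * indicator {0..1} x * (Sn w kt dk v0 k1 t x)\<^sup>2 - f x * indicator {0..1} x * (Sn w kt dk v0 k2 t x)\<^sup>2" if "x \<in> {t<..<1}" for x
    proof -
      have x: "x \<in> {0..1}" using that t by auto
      then show ?thesis using sq[of x] that fpos[OF x] by (simp add: right_diff_distrib[symmetric])
    qed
  qed (use t in auto)
  finally show ?thesis by simp
qed


definition "hh kx e t = ln (An w kt dk v0 f kx t + e) + (An w kt dk v0 f kt t + e) / (An w kt dk v0 f kx t + e)"

lemma hh_meas[measurable]:
  assumes [measurable]: "kx \<in> borel_measurable borel"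
  shows "hh kx e \<in> borel_measurable borel"
  unfolding hh_def by measurable

lemma Uf_hh: "Uf w kt dk v0 f kx e = (LINT t|lborel. indicator {0<..<1} t * hh kx e t)"
  unfolding Uf_def hh_def ..

lemma hh_int:
  assumes [measurable]: "kx \<in> borel_measurable borel" and bx: "\<And>r. \<bar>kx r\<bar> \<le> Cx" and e: "0 < e"
  shows "integrable lborel (\<lambda>t. indicator {0<..<1} t * hh kx e t)"
proof -
  let ?A = "(Cx*CV)\<^sup>2 * integral\<^sup>L lborel f" and ?B = "(Ck*CV)\<^sup>2 * integral\<^sup>L lborel f"
  have bt: "\<And>r. \<bar>kt r\<bar> \<le> Ck" by (rule bkt)
  show ?thesis
  proof (rule bdd_int(1)[where C="\<bar>ln e\<bar> + ?A + e + (?B + e) / e"])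
    fix t :: real assume t: "t \<in> {0<..<1}"
    show "\<bar>hh kx e t\<bar> \<le> \<bar>ln e\<bar> + ?A + e + (?B + e) / e"
      unfolding hh_def
      by (rule h_bound) (use t e An_nonneg An_bound[OF _ bx] An_bound[OF mkt bt] in auto)
  next
    have "0 \<le> integral\<^sup>L lborel f" using fnn by simp
    then show "0 \<le> \<bar>ln e\<bar> + ?A + e + (?B + e) / e" using e by simp
  qed (auto)
qed

lemma hh_ge: assumes "0 < e" shows "hh kt e t \<le> hh kx e t"
  unfolding hh_def using h_ge[OF An_nonneg An_nonneg assms] .

lemma Uf_le:
  assumes [measurable]: "kx \<in> borel_measurable borel" and bx: "\<And>r. \<bar>kx r\<bar> \<le> Cx" and e: "0 < e"
  shows "Uf w kt dk v0 f kt e \<le> Uf w kt dk v0 f kx e"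
  unfolding Uf_hh
  by (rule integral_mono[OF hh_int[OF mkt bkt e] hh_int[OF assms]])
     (auto simp: indicator_def hh_ge[OF e])

lemma Uf_less:
  assumes [measurable]: "kx \<in> borel_measurable borel" and bx: "\<And>r. \<bar>kx r\<bar> \<le> Cx" and e: "0 < e"
    and nnx: "\<And>r. 0 \<le> kx r" and d: "0 < \<delta>"
    and sgn: "(\<forall>r\<in>{0<..<\<delta>}. kx r > kt r) \<or> (\<forall>r\<in>{0<..<\<delta>}. kx r < kt r)"
  shows "Uf w kt dk v0 f kt e < Uf w kt dk v0 f kx e"
proof -
  have i1: "integrable lborel (\<lambda>t. indicator {0<..<1} t * hh kx e t)" by (rule hh_int[OF assms(1,2,3)])
  have i2: "integrable lborel (\<lambda>t. indicator {0<..<1} t * hh kt e t)" by (rule hh_int[OF mkt bkt e])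
  have neq: "An w kt dk v0 f kx t \<noteq> An w kt dk v0 f kt t" if t: "0 \<le> t" "1 - \<delta> < t" "t < 1" for t
    using sgn
  proof
    assume "\<forall>r\<in>{0<..<\<delta>}. kx r > kt r"
    then have "An w kt dk v0 f kt t < An w kt dk v0 f kx t"
      by (intro An_strict[OF assms(1) mkt bx bkt]) (use t pkt in \<open>auto intro: less_imp_le\<close>)
    then show ?thesis by simp
  next
    assume "\<forall>r\<in>{0<..<\<delta>}. kx r < kt r"
    then have "An w kt dk v0 f kx t < An w kt dk v0 f kt t"
      by (intro An_strict[OF mkt assms(1) bkt bx]) (use t nnx in \<open>auto\<close>)
    then show ?thesis by simp
  qed
  have "Uf w kt dk v0 f kx e - Uf w kt dk v0 f kt e =
      (LINT t|lborel. indicator {0<..<1} t * hh kx e t - indicator {0<..<1} t * hh kt e t)"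
    unfolding Uf_hh by (simp add: Bochner_Integration.integral_diff[OF i1 i2])
  also have "\<dots> > 0"
  proof (rule pos_int[where a="max 0 (1 - \<delta>)" and b=1])
    show "integrable lborel (\<lambda>t. indicator {0<..<1} t * hh kx e t - indicator {0<..<1} t * hh kt e t)"
      using i1 i2 by simp
    show "0 \<le> indicator {0<..<1} t * hh kx e t - indicator {0<..<1} t * hh kt e t" for t
      using hh_ge[OF e, of t kx] by (auto simp: indicator_def)
    show "0 < indicator {0<..<1} t * hh kx e t - indicator {0<..<1} t * hh kt e t"
      if "t \<in> {max 0 (1 - \<delta>)<..<1}" for t
    proof -
      have "hh kt e t < hh kx e t"
        unfolding hh_def using h_gt[OF An_nonneg An_nonneg e neq] that by auto
      then show ?thesis using that by (simp add: indicator_def)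
    qed
  qed (use d in auto)
  finally show ?thesis by simp
qed

end

lemma lbint_eq: fixes t x :: real and g :: "real \<Rightarrow> real" shows "t \<le> x \<Longrightarrow> (LBINT u=t..x. g u) = (LINT u|lborel. indicator {t<..<x} u * g u)"
  unfolding interval_lebesgue_integral_def set_lebesgue_integral_def by (auto intro!: Bochner_Integration.integral_cong)

lemma lbint_eq0: fixes x :: real and g :: "real \<Rightarrow> real" shows "0 \<le> x \<Longrightarrow> (LBINT u=0..x. g u) = (LINT u|lborel. indicator {0<..<x} u * g u)"
  using lbint_eq[of 0 x g] by (simp add: zero_ereal_def)

lemma lbint_eq01: fixes g :: "real \<Rightarrow> real" shows "(LBINT u=0..1. g u) = (LINT u|lborel. indicator {0<..<1} u * g u)"
  using lbint_eq[of 0 1 g] by (simp add: zero_ereal_def one_ereal_def)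

lemma sig_meas:
  fixes g :: "real \<Rightarrow> real" and t :: real
  shows "(\<lambda>x. if t < x then (LBINT u=t..x. g u) else 0) \<in> borel_measurable borel"
proof -
  define I where "I = {x. set_integrable lborel {t<..<x} g}"
  have down: "y \<in> I" if "x \<in> I" "y \<le> x" for x y
  proof -
    have "{t<..<y} \<subseteq> {t<..<x}" using that by auto
    then show ?thesis using that set_integrable_subset[of lborel "{t<..<x}" g "{t<..<y}"] unfolding I_def by auto
  qed
  have "is_interval I" unfolding is_interval_1 using down by blast
  then have I[measurable]: "I \<in> sets borel" by (rule real_interval_borel_measurable)
  define J where "J = (\<Union>x\<in>I. {t<..<x})"
  have "open J" unfolding J_def by auto
  then have J[measurable]: "J \<in> sets borel" by auto
  define h where "h u = indicator J u * g u" for u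
  define A :: "nat \<Rightarrow> real set" where
    "A = case_nat (- J) (\<lambda>n. if from_nat_into \<rat> n \<in> I then {t<..<from_nat_into \<rat> n} else {})"
  have hm[measurable]: "h \<in> borel_measurable borel"
  proof (rule measurable_piecewise_restrict2[where A=A])
    show "A n \<in> sets borel" for n unfolding A_def by (cases n) auto
    show "space borel = (\<Union>n. A n)"
    proof safe
      fix u :: real
      show "u \<in> (\<Union>n. A n)"
      proof (cases "u \<in> J")
        case False then show ?thesis by (intro UN_I[of 0]) (auto simp: A_def)
      next
        case True
        then obtain x where x: "x \<in> I" "t < u" "u < x" unfolding J_def by auto
        obtain r where r: "r \<in> \<rat>" "u < r" "r < x" using Rats_dense_in_real[OF x(3)] by auto
        have rI: "r \<in> I" using down[OF x(1)] r by auto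
        obtain n where n: "from_nat_into \<rat> n = r" using from_nat_into_surj[OF countable_rat r(1)] by auto
        show ?thesis by (intro UN_I[of "Suc n"]) (use n rI r x in \<open>auto simp: A_def\<close>)
      qed
    qed auto
    show "\<exists>h'\<in>borel_measurable borel. \<forall>x\<in>A n. h x = h' x" for n
    proof (cases n)
      case 0 then show ?thesis by (intro bexI[of _ "\<lambda>_. 0"]) (auto simp: A_def h_def)
    next
      case (Suc m)
      show ?thesis
      proof (cases "from_nat_into \<rat> m \<in> I")
        case True
        let ?r = "from_nat_into \<rat> m"
        have "integrable lborel (\<lambda>u. indicator {t<..<?r} u *\<^sub>R g u)"
          using True unfolding I_def set_integrable_def by simp
        then have m: "(\<lambda>u. indicator {t<..<?r} u * g u) \<in> borel_measurable borel"
          using borel_measurable_integrable by fastforce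
        have sub: "{t<..<?r} \<subseteq> J" unfolding J_def using True by auto
        show ?thesis using True Suc sub
          by (intro bexI[OF _ m]) (auto simp: A_def h_def indicator_def)
      next
        case False then show ?thesis using Suc by (intro bexI[of _ "\<lambda>_. 0"]) (auto simp: A_def)
      qed
    qed
  qed
  have eq: "(if t < x then (LBINT u=t..x. g u) else 0) =
     (if x \<in> I then (if t < x then (LINT u|lborel. indicator {t<..<x} u * h u) else 0) else 0)" for x
  proof (cases "t < x")
    case True
    show ?thesis
    proof (cases "x \<in> I")
      case xI: True
      have "{t<..<x} \<subseteq> J" unfolding J_def using xI by auto
      then have "(LINT u|lborel. indicator {t<..<x} u * g u) = (LINT u|lborel. indicator {t<..<x} u * h u)"
        by (intro Bochner_Integration.integral_cong) (auto simp: h_def indicator_def)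
      then show ?thesis using True xI lbint_eq[of t x g] by simp
    next
      case False
      then have "\<not> integrable lborel (\<lambda>u. indicator {t<..<x} u * g u)"
        unfolding I_def set_integrable_def by simp
      then show ?thesis using True False lbint_eq[of t x g] by (simp add: not_integrable_integral_eq)
    qed
  qed simp
  show ?thesis unfolding eq by measurable
qed

definition cl :: "real \<Rightarrow> real" where "cl x = max 0 (min 1 x)"

lemma cl_id: "x \<in> {0..1} \<Longrightarrow> cl x = x" by (simp add: cl_def)
lemma cl_in: "cl x \<in> {0..1}" by (simp add: cl_def)
lemma cl_cont: "continuous_on UNIV cl" unfolding cl_def by (intro continuous_intros)

lemma clamp_facts:
  fixes g :: "real \<Rightarrow> real"
  assumes "continuous_on {0..1} g"
  shows "(\<lambda>x. g (cl x)) \<in> borel_measurable borel" "\<exists>C. \<forall>x. \<bar>g (cl x)\<bar> \<le> C"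
proof -
  have c: "continuous_on UNIV (\<lambda>x. g (cl x))"
    by (rule continuous_on_compose2[OF assms cl_cont]) (auto simp: cl_def)
  then show "(\<lambda>x. g (cl x)) \<in> borel_measurable borel" by (rule borel_measurable_continuous_onI)
  have "compact (g ` {0..1})" by (rule compact_continuous_image[OF assms]) auto
  then have "bounded (g ` {0..1})" by (rule compact_imp_bounded)
  then obtain C where "\<forall>y\<in>g ` {0..1}. \<bar>y\<bar> \<le> C" unfolding bounded_real by auto
  then show "\<exists>C. \<forall>x. \<bar>g (cl x)\<bar> \<le> C" using cl_in by blast
qed

lemma kernel_facts:
  fixes k :: "'p::euclidean_space \<Rightarrow> real \<Rightarrow> real"
  assumes "C22_on k \<Theta> {0..1}" "\<xi> \<in> \<Theta>"
  shows "continuous_on {0..1} (k \<xi>)" "continuous_on {0..1} (kdot k \<xi>)"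
proof -
  obtain S K where S: "open S" "\<Theta> \<times> {0..1} \<subseteq> S" and KK: "\<forall>x\<in>\<Theta>. \<forall>t\<in>{0..1}. K x t = k x t"
    and cont: "\<forall>ds. admissible22 ds \<longrightarrow> continuous_on S (\<lambda>z. papply K ds (fst z) (snd z))"
    and dif: "\<forall>d ds. admissible22 (d # ds) \<longrightarrow> (\<forall>z\<in>S. pdir_differentiable (papply K ds) d (fst z) (snd z))"
    using assms(1) unfolding C22_on_def by blast
  have a0: "admissible22 ([] :: 'p option list)" by (simp add: admissible22_def)
  have a1: "admissible22 [None :: 'p option]" by (simp add: admissible22_def)
  have sub: "(\<lambda>r. (\<xi>, r)) ` {0..1} \<subseteq> S" using S assms(2) by auto
  have pc: "continuous_on {0..1} (\<lambda>r. (\<xi>, r))" by (intro continuous_intros)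
  have c0: "continuous_on {0..1} (\<lambda>r. K \<xi> r)"
    using continuous_on_compose2[OF cont[rule_format, OF a0] pc sub] by simp
  then show "continuous_on {0..1} (k \<xi>)"
    by (rule continuous_on_cong[THEN iffD1, rotated 2]) (use KK assms(2) in auto)
  have c1: "continuous_on {0..1} (\<lambda>r. deriv (\<lambda>s. K \<xi> s) r)"
    using continuous_on_compose2[OF cont[rule_format, OF a1] pc sub] by (simp add: pdir_def)
  have eq: "kdot k \<xi> r = deriv (\<lambda>s. K \<xi> s) r" if r: "r \<in> {0..1}" for r
  proof -
    have "(\<xi>, r) \<in> S" using sub r by auto
    then have "(\<lambda>s. K \<xi> s) field_differentiable (at r)"
      using dif[rule_format, OF a1, of "(\<xi>, r)"] by (simp add: pdir_differentiable_def)
    then have "((\<lambda>s. K \<xi> s) has_real_derivative deriv (\<lambda>s. K \<xi> s) r) (at r)"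
      using DERIV_deriv_iff_field_differentiable by blast
    then have "((\<lambda>s. K \<xi> s) has_vector_derivative deriv (\<lambda>s. K \<xi> s) r) (at r within {0..1})"
      by (simp add: has_real_derivative_iff_has_vector_derivative has_vector_derivative_at_within)
    note hv = this
    have "(k \<xi> has_vector_derivative deriv (\<lambda>s. K \<xi> s) r) (at r within {0..1})"
      by (rule has_vector_derivative_transform[OF r _ hv]) (use KK assms(2) in auto)
    then show ?thesis unfolding kdot_def
      by (intro vector_derivative_within_closed_interval[OF _ r]) auto
  qed
  show "continuous_on {0..1} (kdot k \<xi>)"
    by (rule continuous_on_cong[THEN iffD1, OF refl _ c1]) (use eq in auto)
qed


context
  fixes k :: "'p \<Rightarrow> real \<Rightarrow> real" and \<theta> :: 'p and V0 :: "real \<Rightarrow> real"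
    and W :: "real \<Rightarrow> 'a \<Rightarrow> real" and \<omega> :: 'a
begin

abbreviation "ww \<equiv> (\<lambda>s. W (cl s) \<omega>)"
abbreviation "kk \<equiv> (\<lambda>r. k \<theta> (cl r))"
abbreviation "dd \<equiv> (\<lambda>r. kdot k \<theta> (cl r))"
abbreviation "vv \<equiv> (\<lambda>u. V0 (cl u))"

lemma Vproc_eq:
  assumes t: "0 \<le> t" "u \<le> 1"
  shows "Vproc k \<theta> V0 W t u \<omega> = Vn ww kk dd vv t u"
proof (cases "t \<le> u")
  case True
  have i1: "(LBINT s=0..t. W s \<omega> * kdot k \<theta> (u - s)) = (LINT s|lborel. indicator {0<..<t} s * (ww s * dd (u - s)))"
    unfolding lbint_eq0[OF t(1)]
    by (intro Bochner_Integration.integral_cong) (use t True in \<open>auto simp: indicator_def cl_id\<close>)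
  have i2: "(LBINT s=0..t. (k \<theta> (u - s))\<^sup>2) = Qn kk t u"
    unfolding lbint_eq0[OF t(1)] Qn_def
    by (intro Bochner_Integration.integral_cong) (use t True in \<open>auto simp: indicator_def cl_id\<close>)
  have g: "wiener_int k \<theta> W t u \<omega> = Gn ww kk dd t u"
    unfolding wiener_int_def Gn_def i1 using t True by (simp add: cl_id)
  show ?thesis unfolding Vproc_def Vn_def g i2 using t True by (simp add: cl_id)
next
  case False then show ?thesis unfolding Vproc_def Vn_def by simp
qed

lemma sigma_eq:
  assumes t: "0 \<le> t" "x \<le> 1"
  shows "sigma_fwd k \<theta> V0 W t x \<xi> \<omega> = Sn ww kk dd vv (\<lambda>r. k \<xi> (cl r)) t x"
proof (cases "t < x")
  case True
  have "(LBINT u=t..x. k \<xi> (u - t) * Vproc k \<theta> V0 W t u \<omega>) =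
     (LINT u|lborel. indicator {t<..<x} u * ((\<lambda>r. k \<xi> (cl r)) (u - t) * Vn ww kk dd vv t u))"
    unfolding lbint_eq[of t x, OF less_imp_le[OF True]]
    by (intro Bochner_Integration.integral_cong) (use t True Vproc_eq in \<open>auto simp: indicator_def cl_id\<close>)
  then show ?thesis unfolding sigma_fwd_def Sn_def using True by simp
next
  case False then show ?thesis unfolding sigma_fwd_def Sn_def by simp
qed

lemma A_eq:
  assumes mu: "\<mu> = density lborel f" and mf: "f \<in> borel_measurable lborel" and fnn: "\<And>x. 0 \<le> f x"
    and f0: "\<And>x. x \<notin> {0..1} \<Longrightarrow> f x = 0" and t: "0 \<le> t"
  shows "(\<integral>x. (sigma_fwd k \<theta> V0 W t x \<xi> \<omega>)\<^sup>2 \<partial>\<mu>) = An ww kk dd vv f (\<lambda>r. k \<xi> (cl r)) t"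
proof -
  have m: "(\<lambda>x. sigma_fwd k \<theta> V0 W t x \<xi> \<omega>) \<in> borel_measurable borel"
    unfolding sigma_fwd_def by (rule sig_meas)
  have m2: "(\<lambda>x. (sigma_fwd k \<theta> V0 W t x \<xi> \<omega>)\<^sup>2) \<in> borel_measurable lborel"
    using m by simp
  have "(\<integral>x. (sigma_fwd k \<theta> V0 W t x \<xi> \<omega>)\<^sup>2 \<partial>\<mu>) = (LINT x|lborel. f x *\<^sub>R (sigma_fwd k \<theta> V0 W t x \<xi> \<omega>)\<^sup>2)"
    unfolding mu by (rule integral_density[OF m2 mf]) (use fnn in auto)
  also have "\<dots> = An ww kk dd vv f (\<lambda>r. k \<xi> (cl r)) t"
    unfolding An_def
  proof (intro Bochner_Integration.integral_cong refl)
    fix x show "f x *\<^sub>R (sigma_fwd k \<theta> V0 W t x \<xi> \<omega>)\<^sup>2 = f x * indicator {0..1} x * (Sn ww kk dd vv (\<lambda>r. k \<xi> (cl r)) t x)\<^sup>2"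
      using sigma_eq[OF t, of x \<xi>] f0[of x] by (cases "x \<in> {0..1}") auto
  qed
  finally show ?thesis .
qed

lemma U_eq:
  assumes mu: "\<mu> = density lborel f" and mf: "f \<in> borel_measurable lborel" and fnn: "\<And>x. 0 \<le> f x"
    and f0: "\<And>x. x \<notin> {0..1} \<Longrightarrow> f x = 0"
  shows "Ueps k \<theta> V0 W \<mu> \<epsilon> \<xi> \<omega> = Uf ww kk dd vv f (\<lambda>r. k \<xi> (cl r)) \<epsilon>"
  unfolding Ueps_def Uf_def lbint_eq01
proof (intro Bochner_Integration.integral_cong refl)
  fix t :: real
  show "indicator {0<..<1} t * (ln ((\<integral>x. (sigma_fwd k \<theta> V0 W t x \<xi> \<omega>)\<^sup>2 \<partial>\<mu>) + \<epsilon>) +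
      ((\<integral>x. (sigma_fwd k \<theta> V0 W t x \<theta> \<omega>)\<^sup>2 \<partial>\<mu>) + \<epsilon>) / ((\<integral>x. (sigma_fwd k \<theta> V0 W t x \<xi> \<omega>)\<^sup>2 \<partial>\<mu>) + \<epsilon>)) =
    indicator {0<..<1} t * (ln (An ww kk dd vv f (\<lambda>r. k \<xi> (cl r)) t + \<epsilon>) +
      (An ww kk dd vv f kk t + \<epsilon>) / (An ww kk dd vv f (\<lambda>r. k \<xi> (cl r)) t + \<epsilon>))"
  proof (cases "t \<in> {0<..<1}")
    case True
    then have t: "0 \<le> t" by simp
    show ?thesis using A_eq[OF assms t, of \<xi>] A_eq[OF assms t, of \<theta>] by simp
  qed simp
qed

end

theorem mainTheorem18:
  fixes M :: "'a measure" and F :: "real \<Rightarrow> 'a measure" and W :: "real \<Rightarrow> 'a \<Rightarrow> real"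
    and \<Theta> :: "'p::euclidean_space set" and k :: "'p \<Rightarrow> real \<Rightarrow> real" and \<theta> :: 'p
    and V0 :: "real \<Rightarrow> real" and \<mu> :: "real measure" and f :: "real \<Rightarrow> real"
  assumes Theta: "compact \<Theta>" "convex \<Theta>" "\<theta> \<in> \<Theta>"
    and BM: "std_BM M F W"
    and V0: "continuous_on {0..1} V0" "\<forall>u\<in>{0..1}. V0 u > 0"
    and H1: "C22_on k \<Theta> {0..1}" "\<forall>\<xi>\<in>\<Theta>. \<forall>t\<in>{0..1}. k \<xi> t > 0"
    and H2: "\<forall>\<xi>\<in>\<Theta>. \<forall>\<xi>'\<in>\<Theta>. \<xi> \<noteq> \<xi>' \<longrightarrow> (\<exists>\<delta>>0. \<delta> \<le> 1 \<and>
               ((\<forall>t\<in>{0<..<\<delta>}. k \<xi> t - k \<xi>' t > 0) \<or> (\<forall>t\<in>{0<..<\<delta>}. k \<xi> t - k \<xi>' t < 0)))"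
    and mu: "prob_space \<mu>" "\<mu> = density lborel f" "f \<in> borel_measurable lborel"
      "\<forall>x\<in>{0..1}. f x > 0" "\<forall>x. x \<notin> {0..1} \<longrightarrow> f x = 0"
  shows "AE \<omega> in M. \<forall>\<epsilon>>0.
           {\<xi>\<in>\<Theta>. \<forall>\<eta>\<in>\<Theta>. Ueps k \<theta> V0 W \<mu> \<epsilon> \<xi> \<omega> \<le> Ueps k \<theta> V0 W \<mu> \<epsilon> \<eta> \<omega>} = {\<theta>}"
proof -
  have cAE: "AE \<omega> in M. continuous_on {0..1} (\<lambda>t. W t \<omega>)"
    using BM unfolding std_BM_def by blast
  have fnn: "\<And>x. 0 \<le> f x"
    using mu(4,5) by (metis less_imp_le order_refl)
  have f0: "\<And>x. x \<notin> {0..1} \<Longrightarrow> f x = 0" using mu(5) by blast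
  have mfb[measurable]: "f \<in> borel_measurable borel" using mu(3) by simp
  have intf: "integrable lborel f"
  proof -
    have "emeasure \<mu> (space \<mu>) = 1" using prob_space.emeasure_space_1[OF mu(1)] .
    then have "emeasure (density lborel f) UNIV = 1" using mu(2) by simp
    then have "(\<integral>\<^sup>+ x. ennreal (f x) \<partial>lborel) = 1"
      by (subst (asm) emeasure_density) auto
    then show ?thesis unfolding integrable_iff_bounded using fnn by simp
  qed
  have kth: "continuous_on {0..1} (k \<theta>)" "continuous_on {0..1} (kdot k \<theta>)"
    using kernel_facts[OF H1(1) Theta(3)] by auto
  obtain Ck where Ck: "\<And>x. \<bar>k \<theta> (cl x)\<bar> \<le> Ck" using clamp_facts(2)[OF kth(1)] by blast
  obtain Cd where Cd: "\<And>x. \<bar>kdot k \<theta> (cl x)\<bar> \<le> Cd" using clamp_facts(2)[OF kth(2)] by blast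
  obtain Cv where Cv0: "\<And>x. \<bar>V0 (cl x)\<bar> \<le> Cv" using clamp_facts(2)[OF V0(1)] by blast
  have Cv: "\<And>x. V0 (cl x) \<le> Cv" using Cv0 abs_le_D1 by blast
  have pv0: "\<And>x. 0 < V0 (cl x)" using V0(2) cl_in by blast
  have pkt: "\<And>x. 0 < k \<theta> (cl x)" using H1(2) Theta(3) cl_in by blast
  show ?thesis
    using cAE
  proof (rule eventually_mono)
    fix \<omega> assume cw: "continuous_on {0..1} (\<lambda>t. W t \<omega>)"
    obtain Cw where Cw: "\<And>x. \<bar>W (cl x) \<omega>\<bar> \<le> Cw" using clamp_facts(2)[OF cw] by blast
    interpret nice "\<lambda>s. W (cl s) \<omega>" "\<lambda>r. k \<theta> (cl r)" "\<lambda>r. kdot k \<theta> (cl r)" "\<lambda>u. V0 (cl u)" f Cw Ck Cd Cv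
    proof
      show "(\<lambda>s. W (cl s) \<omega>) \<in> borel_measurable borel" using clamp_facts(1)[OF cw] by simp
      show "(\<lambda>r. k \<theta> (cl r)) \<in> borel_measurable borel" using clamp_facts(1)[OF kth(1)] by simp
      show "(\<lambda>r. kdot k \<theta> (cl r)) \<in> borel_measurable borel" using clamp_facts(1)[OF kth(2)] by simp
      show "(\<lambda>u. V0 (cl u)) \<in> borel_measurable borel" using clamp_facts(1)[OF V0(1)] by simp
    qed (use Cw Ck Cd Cv pv0 pkt fnn mu(4) intf in auto)
    have kx: "(\<lambda>r. k \<xi> (cl r)) \<in> borel_measurable borel" "\<exists>C. \<forall>r. \<bar>k \<xi> (cl r)\<bar> \<le> C"
      "\<And>r. 0 \<le> k \<xi> (cl r)" if "\<xi> \<in> \<Theta>" for \<xi>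
    proof -
      have c: "continuous_on {0..1} (k \<xi>)" using kernel_facts[OF H1(1) that] by auto
      show "(\<lambda>r. k \<xi> (cl r)) \<in> borel_measurable borel" "\<exists>C. \<forall>r. \<bar>k \<xi> (cl r)\<bar> \<le> C"
        using clamp_facts[OF c] by auto
      show "0 \<le> k \<xi> (cl r)" for r using H1(2) that cl_in by (meson less_imp_le)
    qed
    have Ueq: "Ueps k \<theta> V0 W \<mu> \<epsilon> \<xi> \<omega> = Uf (\<lambda>s. W (cl s) \<omega>) (\<lambda>r. k \<theta> (cl r)) (\<lambda>r. kdot k \<theta> (cl r)) (\<lambda>u. V0 (cl u)) f (\<lambda>r. k \<xi> (cl r)) \<epsilon>" for \<epsilon> \<xi>
      by (rule U_eq[OF mu(2,3) fnn f0])
    show "\<forall>\<epsilon>>0. {\<xi>\<in>\<Theta>. \<forall>\<eta>\<in>\<Theta>. Ueps k \<theta> V0 W \<mu> \<epsilon> \<xi> \<omega> \<le> Ueps k \<theta> V0 W \<mu> \<epsilon> \<eta> \<omega>} = {\<theta>}"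
    proof (intro allI impI)
      fix \<epsilon> :: real assume e: "0 < \<epsilon>"
      have le: "Ueps k \<theta> V0 W \<mu> \<epsilon> \<theta> \<omega> \<le> Ueps k \<theta> V0 W \<mu> \<epsilon> \<eta> \<omega>" if eta: "\<eta> \<in> \<Theta>" for \<eta>
      proof -
        obtain C where C: "\<forall>r. \<bar>k \<eta> (cl r)\<bar> \<le> C" using kx(2)[OF eta] by blast
        show ?thesis unfolding Ueq by (rule Uf_le[OF kx(1)[OF eta] _ e]) (use C in auto)
      qed
      have lt: "Ueps k \<theta> V0 W \<mu> \<epsilon> \<theta> \<omega> < Ueps k \<theta> V0 W \<mu> \<epsilon> \<xi> \<omega>" if xi: "\<xi> \<in> \<Theta>" "\<xi> \<noteq> \<theta>" for \<xi>
      proof -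
        obtain C where C: "\<forall>r. \<bar>k \<xi> (cl r)\<bar> \<le> C" using kx(2)[OF xi(1)] by blast
        obtain \<delta> where d: "\<delta> > 0" "\<delta> \<le> 1"
          and s: "(\<forall>t\<in>{0<..<\<delta>}. k \<xi> t - k \<theta> t > 0) \<or> (\<forall>t\<in>{0<..<\<delta>}. k \<xi> t - k \<theta> t < 0)"
          using H2 xi Theta(3) by blast
        have clr: "cl r = r" if r: "r \<in> {0<..<\<delta>}" for r using r d by (intro cl_id) auto
        have sgn: "(\<forall>r\<in>{0<..<\<delta>}. k \<xi> (cl r) > k \<theta> (cl r)) \<or> (\<forall>r\<in>{0<..<\<delta>}. k \<xi> (cl r) < k \<theta> (cl r))"
          using s clr by auto
        show ?thesis unfolding Ueq
          by (rule Uf_less[OF kx(1)[OF xi(1)] _ e kx(3)[OF xi(1)] d(1) sgn]) (use C in auto)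
      qed
      show "{\<xi>\<in>\<Theta>. \<forall>\<eta>\<in>\<Theta>. Ueps k \<theta> V0 W \<mu> \<epsilon> \<xi> \<omega> \<le> Ueps k \<theta> V0 W \<mu> \<epsilon> \<eta> \<omega>} = {\<theta>}"
      proof safe
        fix \<xi> assume "\<xi> \<in> \<Theta>" "\<forall>\<eta>\<in>\<Theta>. Ueps k \<theta> V0 W \<mu> \<epsilon> \<xi> \<omega> \<le> Ueps k \<theta> V0 W \<mu> \<epsilon> \<eta> \<omega>"
        then show "\<xi> = \<theta>" using lt[of \<xi>] Theta(3) by force
      qed (use Theta(3) le in auto)
    qed
  qed
qed

end
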